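(* Let $f$ satisfy $(\mathcal A)$ and let $p\ge1$. Let $y_0\in\mathcal H$ and define recursively for $k\ge0$ $$\lambda_k=\|\nabla f(y_k)\|^{-\frac{p-1}{p}},\qquad y_{k+1}=\operatorname{prox}_{\lambda_k f}(y_k),$$ and assume $\nabla f(y_k)\neq0$ for all $k\ge0$. Then $f(y_{k+1})-\inf_{\mathcal H}f=o\big(k^{-(2-\frac1p)}\big)$ as $k\to+\infty$, and $(y_k)_{k\ge0}$ converges weakly to an element of $S=\operatorname{argmin} f$.
   Context: $\mathcal H$ is a real Hilbert space. Assumption $(\mathcal A)$: $f:\mathcal H\to\mathbb R$ is convex and continuously differentiable, $S=\operatorname{argmin}_{\mathcal H} f\neq\emptyset$, and $\nabla f$ is Lipschitz continuous on bounded subsets of $\mathcal H$. For $\lambda>0$, $\operatorname{prox}_{\lambda f}(y)=\operatorname{argmin}_{u\in\mathcal H}\{f(u)+\frac{1}{2\lambda}\|u-y\|^2\}$. *)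

theory Defs
  imports "HOL-Analysis.Analysis" "HOL-Library.Landau_Symbols"
begin

definition prox :: "real \<Rightarrow> ('a::real_normed_vector \<Rightarrow> real) \<Rightarrow> 'a \<Rightarrow> 'a" where
  "prox lam f y = (THE u. \<forall>v. f u + (1 / (2 * lam)) * (norm (u - y))\<^sup>2
                              \<le> f v + (1 / (2 * lam)) * (norm (v - y))\<^sup>2)"

definition weakly_converges :: "(nat \<Rightarrow> 'a::real_inner) \<Rightarrow> 'a \<Rightarrow> bool" where
  "weakly_converges y z \<longleftrightarrow> (\<forall>v. (\<lambda>k. inner (y k) v) \<longlonglongrightarrow> inner z v)"

end

theory Submission
  imports Defs "HOL-Library.Diagonal_Subsequence" "HOL-Library.Infinite_Set"
begin


lemma midpoint_sq:
  fixes a b :: "'a::real_inner"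
  shows "(norm ((1/2) *\<^sub>R (a + b)))\<^sup>2 = ((norm a)\<^sup>2 + (norm b)\<^sup>2)/2 - (norm (a - b))\<^sup>2 / 4"
  unfolding power2_norm_eq_inner
  apply (simp add: inner_simps inner_commute algebra_simps)
  by (simp add: field_simps)

lemma min_exists:
  fixes \<phi> :: "'a::{real_inner,complete_space} \<Rightarrow> real"
  assumes C: "closed C" "convex C" "C \<noteq> {}" and cont: "continuous_on C \<phi>"
    and bdd: "\<And>u. u \<in> C \<Longrightarrow> b \<le> \<phi> u" and c: "c > 0"
    and mid: "\<And>u w. u \<in> C \<Longrightarrow> w \<in> C \<Longrightarrow>
       \<phi> ((1/2) *\<^sub>R (u + w)) \<le> (\<phi> u + \<phi> w)/2 - c * (norm (u - w))\<^sup>2"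
  shows "\<exists>u\<in>C. \<forall>w\<in>C. \<phi> u \<le> \<phi> w"
proof -
  define m where "m = Inf (\<phi> ` C)"
  have bddb: "bdd_below (\<phi> ` C)" using bdd by (intro bdd_belowI[of _ b]) auto
  have lb: "\<And>w. w \<in> C \<Longrightarrow> m \<le> \<phi> w" unfolding m_def using bddb by (simp add: cINF_lower)
  have "\<forall>n::nat. \<exists>u\<in>C. \<phi> u < m + 1/Suc n"
  proof
    fix n :: nat
    have "Inf (\<phi> ` C) < m + 1/Suc n" unfolding m_def by simp
    then show "\<exists>u\<in>C. \<phi> u < m + 1/Suc n" using cInf_lessD[of "\<phi> ` C"] C(3) by blast
  qed
  then obtain u where uC: "\<And>n. u n \<in> C" and uphi: "\<And>n. \<phi> (u n) < m + 1/Suc n" by metis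
  have midC: "\<And>v w. v \<in> C \<Longrightarrow> w \<in> C \<Longrightarrow> (1/2) *\<^sub>R (v + w) \<in> C"
  proof -
    fix v w assume "v \<in> C" "w \<in> C"
    then have "(1 - 1/2) *\<^sub>R v + (1/2) *\<^sub>R w \<in> C" using C(2) by (intro convexD) auto
    then show "(1/2) *\<^sub>R (v + w) \<in> C" by (simp add: scaleR_add_right)
  qed
  have aux: "X \<le> (a+b)/2" if "mm \<le> t1" "t1 \<le> (t2+t3)/2 - X" "t2 < mm+a" "t3 < mm+b"
    for mm t1 t2 t3 X a b :: real using that by (simp add: field_simps)
  have key: "c * (norm (u i - u j))\<^sup>2 \<le> (1/Suc i + 1/Suc j)/2" for i j
  proof -
    have "m \<le> \<phi> ((1/2) *\<^sub>R (u i + u j))" using lb midC uC by blast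
    then show ?thesis using mid[OF uC uC, of i j] uphi[of i] uphi[of j]
      by (rule aux)
  qed
  have "Cauchy u"
  proof (rule metric_CauchyI)
    fix e :: real assume e: "e > 0"
    then have "c * e\<^sup>2 > 0" using c by simp
    then obtain M where M: "inverse (real (Suc M)) < c * e\<^sup>2" using reals_Archimedean by blast
    show "\<exists>M. \<forall>i\<ge>M. \<forall>j\<ge>M. dist (u i) (u j) < e"
    proof (intro exI allI impI)
      fix i j assume ij: "M \<le> i" "M \<le> j"
      have "1/Suc i \<le> 1/Suc M" "1/Suc j \<le> 1/Suc M" using ij by (auto simp: frac_le)
      then have "c * (norm (u i - u j))\<^sup>2 < c * e\<^sup>2" using key[of i j] M by (simp add: inverse_eq_divide)
      then have "(norm (u i - u j))\<^sup>2 < e\<^sup>2" using c by simp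
      then have "norm (u i - u j) < e" using e by (simp add: power_less_imp_less_base)
      then show "dist (u i) (u j) < e" by (simp add: dist_norm)
    qed
  qed
  then obtain l where l: "u \<longlonglongrightarrow> l" using Cauchy_convergent_iff convergent_def by blast
  have lC: "l \<in> C" using closed_sequentially[OF C(1)] uC l by blast
  have t1: "(\<lambda>n. \<phi> (u n)) \<longlonglongrightarrow> \<phi> l"
    using cont lC uC l unfolding continuous_on_sequentially comp_def by blast
  have t2: "(\<lambda>n. \<phi> (u n)) \<longlonglongrightarrow> m"
  proof (rule tendsto_sandwich[of "\<lambda>n. m" _ _ "\<lambda>n. m + 1/Suc n"])
    show "\<forall>\<^sub>F n in sequentially. m \<le> \<phi> (u n)" using lb uC by auto
    show "\<forall>\<^sub>F n in sequentially. \<phi> (u n) \<le> m + 1/Suc n" using uphi by (intro always_eventually allI less_imp_le) 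
    show "(\<lambda>n. m) \<longlonglongrightarrow> m" by simp
    have "(\<lambda>n. m + 1/real (Suc n)) \<longlonglongrightarrow> m + 0"
      by (intro tendsto_add tendsto_const) (use LIMSEQ_inverse_real_of_nat in \<open>simp add: inverse_eq_divide\<close>)
    then show "(\<lambda>n. m + 1/real (Suc n)) \<longlonglongrightarrow> m" by simp
  qed
  have "\<phi> l = m" using LIMSEQ_unique[OF t1 t2] .
  then show ?thesis using lC lb by auto
qed

lemma proj_exists:
  fixes v :: "'a::{real_inner,complete_space}"
  assumes C: "closed C" "convex C" "C \<noteq> {}"
  shows "\<exists>a\<in>C. \<forall>c\<in>C. norm (v - a) \<le> norm (v - c)"
proof -
  have "\<exists>a\<in>C. \<forall>c\<in>C. (norm (v - a))\<^sup>2 \<le> (norm (v - c))\<^sup>2"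
  proof (rule min_exists[OF C, of _ 0 "1/4"])
    show "continuous_on C (\<lambda>u. (norm (v - u))\<^sup>2)" by (intro continuous_intros)
    show "\<And>u. u \<in> C \<Longrightarrow> 0 \<le> (norm (v - u))\<^sup>2" by simp
    show "(0::real) < 1/4" by simp
    fix u w assume "u \<in> C" "w \<in> C"
    have e: "v - (1/2) *\<^sub>R (u + w) = (1/2) *\<^sub>R ((v - u) + (v - w))"
      by (simp add: algebra_simps flip: scaleR_add_left)
    have e2: "(v - u) - (v - w) = w - u" by simp
    show "(norm (v - (1/2) *\<^sub>R (u + w)))\<^sup>2
        \<le> ((norm (v - u))\<^sup>2 + (norm (v - w))\<^sup>2) / 2 - 1/4 * (norm (u - w))\<^sup>2"
      unfolding e midpoint_sq e2 by (simp add: norm_minus_commute)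
  qed
  then show ?thesis by (meson norm_ge_zero power2_le_imp_le)
qed

lemma proj_orth:
  fixes v a c :: "'a::real_inner"
  assumes S: "subspace C" and a: "a \<in> C" and c: "c \<in> C"
    and min: "\<forall>c\<in>C. norm (v - a) \<le> norm (v - c)"
  shows "inner (v - a) c = 0"
proof -
  define w where "w = v - a"
  define q where "q = inner w c"
  define N where "N = (norm c)\<^sup>2"
  have N0: "N \<ge> 0" unfolding N_def by simp
  have ineq: "2 * t * q \<le> t\<^sup>2 * N" for t :: real
  proof -
    have "a + t *\<^sub>R c \<in> C" using S a c by (simp add: subspace_add subspace_scale)
    then have "norm w \<le> norm (w - t *\<^sub>R c)" using min unfolding w_def by (simp add: algebra_simps)
    then have "(norm w)\<^sup>2 \<le> (norm (w - t *\<^sub>R c))\<^sup>2" by (simp add: power_mono)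
    then show ?thesis unfolding power2_norm_eq_inner q_def N_def
      by (simp add: inner_simps inner_commute power2_eq_square algebra_simps)
  qed
  define t where "t = q / (N + 1)"
  have "2 * t * q \<le> t\<^sup>2 * N" by (rule ineq)
  then have "(N+1)\<^sup>2 * (2 * t * q) \<le> (N+1)\<^sup>2 * (t\<^sup>2 * N)" by (simp add: mult_left_mono)
  moreover have "(N+1)\<^sup>2 * (2 * t * q) = 2 * q * q * (N + 1)" unfolding t_def using N0
    by (simp add: power2_eq_square field_simps)
  moreover have "(N+1)\<^sup>2 * (t\<^sup>2 * N) = q * q * N"
  proof -
    define M where "M = N + 1"
    have "M \<noteq> 0" using N0 unfolding M_def by simp
    then have "M\<^sup>2 * ((q / M)\<^sup>2 * N) = q * q * N" by (simp add: power2_eq_square field_simps)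
    then show ?thesis unfolding t_def M_def .
  qed
  ultimately have "2 * q * q * (N + 1) \<le> q * q * N" by simp
  then have "q * q * (N + 2) \<le> 0" by (simp add: algebra_simps)
  moreover have "q * q \<ge> 0" by simp
  moreover have "q * q * N \<ge> 0" using N0 by simp
  moreover have "q * q * (N + 2) = q * q * N + 2 * (q * q)" by (simp add: algebra_simps)
  ultimately have "q * q = 0" by linarith
  then show ?thesis unfolding q_def w_def by simp
qed

lemma riesz:
  fixes l :: "'a::{real_inner,complete_space} \<Rightarrow> real"
  assumes bl: "bounded_linear l"
  shows "\<exists>z. \<forall>v. l v = inner z v"
proof (cases "\<forall>v. l v = 0")
  case True then show ?thesis by (intro exI[of _ 0]) simp
next
  case False
  then obtain v0 where v0: "l v0 \<noteq> 0" by blast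
  interpret l: bounded_linear l by (rule bl)
  define N where "N = {v. l v = 0}"
  have sN: "subspace N" unfolding N_def subspace_def by (simp add: l.add l.scale)
  have cN: "closed N" unfolding N_def
    by (intro closed_Collect_eq continuous_intros l.continuous_on)
  obtain a where aN: "a \<in> N" and amin: "\<forall>c\<in>N. norm (v0 - a) \<le> norm (v0 - c)"
    using proj_exists[OF cN subspace_imp_convex[OF sN]] sN unfolding subspace_def by blast
  define w where "w = v0 - a"
  have lw: "l w = l v0" using aN unfolding w_def N_def by (simp add: l.diff)
  have orth: "\<And>c. c \<in> N \<Longrightarrow> inner w c = 0" unfolding w_def using proj_orth[OF sN aN _ amin] by blast
  have wnz: "w \<noteq> 0" using lw v0 l.zero by auto
  then have nw: "inner w w \<noteq> 0" by simp
  define z where "z = (l w / inner w w) *\<^sub>R w"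
  have "l v = inner z v" for v
  proof -
    have "v - (l v / l w) *\<^sub>R w \<in> N" unfolding N_def using lw v0 by (simp add: l.diff l.scale)
    then have "inner w (v - (l v / l w) *\<^sub>R w) = 0" by (rule orth)
    then have "inner w v = (l v / l w) * inner w w" by (simp add: inner_simps)
    then show ?thesis unfolding z_def using nw lw v0 by (simp add: inner_simps)
  qed
  then show ?thesis by blast
qed


lemma diag_sub:
  fixes x :: "nat \<Rightarrow> 'a::real_inner"
  assumes K: "\<And>n. norm (x n) \<le> K"
  shows "\<exists>r. strict_mono r \<and> (\<forall>m. convergent (\<lambda>j. inner (x (r j)) (x m)))"
proof -
  define P where "P = (\<lambda>m (s::nat\<Rightarrow>nat). convergent (\<lambda>j. inner (x (s j)) (x m)))"
  interpret subseqs P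
  proof
    fix n and s :: "nat \<Rightarrow> nat" assume "strict_mono s"
    have "bounded (range (\<lambda>j. inner (x (s j)) (x n)))"
    proof (rule boundedI[of _ "K * norm (x n)"])
      fix y assume "y \<in> range (\<lambda>j. inner (x (s j)) (x n))"
      then obtain j where y: "y = inner (x (s j)) (x n)" by blast
      have "norm y \<le> norm (x (s j)) * norm (x n)" unfolding y real_norm_def by (rule Cauchy_Schwarz_ineq2)
      also have "\<dots> \<le> K * norm (x n)" using K by (simp add: mult_right_mono)
      finally show "norm y \<le> K * norm (x n)" .
    qed
    then obtain l r where "strict_mono r" "((\<lambda>j. inner (x (s j)) (x n)) \<circ> r) \<longlonglongrightarrow> l"
      using bounded_imp_convergent_subsequence by blast
    then show "\<exists>r'. strict_mono r' \<and> P n (s \<circ> r')"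
      unfolding P_def convergent_def by (auto simp: comp_def)
  qed
  have "P k (diagseq \<circ> (+) (Suc k))" for k
  proof (rule diagseq_holds)
    fix r s n assume "strict_mono (r::nat\<Rightarrow>nat)" "P n s"
    then show "P n (s \<circ> r)" unfolding P_def
      using convergent_subseq_convergent[of "\<lambda>j. inner (x (s j)) (x n)" r] by (simp add: comp_def)
  qed
  have "convergent (\<lambda>j. inner (x (diagseq j)) (x m))" for m
  proof -
    obtain L where "(\<lambda>j. inner (x (diagseq (Suc m + j))) (x m)) \<longlonglongrightarrow> L"
      using \<open>P m (diagseq \<circ> (+) (Suc m))\<close> unfolding P_def convergent_def comp_def by blast
    then have "(\<lambda>j. inner (x (diagseq (j + Suc m))) (x m)) \<longlonglongrightarrow> L" by (simp add: add.commute)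
    then have "(\<lambda>j. inner (x (diagseq j)) (x m)) \<longlonglongrightarrow> L" by (rule LIMSEQ_offset)
    then show ?thesis unfolding convergent_def by blast
  qed
  then show ?thesis using subseq_diagseq by blast
qed

lemma weak_compact:
  fixes x :: "nat \<Rightarrow> 'a::{real_inner,complete_space}"
  assumes K: "\<And>n. norm (x n) \<le> K"
  shows "\<exists>r z. strict_mono r \<and> weakly_converges (x \<circ> r) z"
proof -
  obtain r where r: "strict_mono r" and cm: "\<And>m. convergent (\<lambda>j. inner (x (r j)) (x m))"
    using diag_sub[of x K] K by blast
  define X where "X = x \<circ> r"
  have XK: "norm (X j) \<le> K" for j unfolding X_def using K by simp
  have K0: "K \<ge> 0" using K[of 0] norm_ge_zero order_trans by blast
  have ib: "\<bar>inner (X j) v\<bar> \<le> K * norm v" for j v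
  proof -
    have "\<bar>inner (X j) v\<bar> \<le> norm (X j) * norm v" by (rule Cauchy_Schwarz_ineq2)
    also have "\<dots> \<le> K * norm v" using XK by (simp add: mult_right_mono)
    finally show ?thesis .
  qed
  define D where "D = {v. convergent (\<lambda>j. inner (X j) v)}"
  have D0: "0 \<in> D" unfolding D_def by (simp add: convergent_const)
  have Dadd: "v + w \<in> D" if "v \<in> D" "w \<in> D" for v w
    using that unfolding D_def by (simp add: inner_add_right convergent_add)
  have Dsc: "c *\<^sub>R v \<in> D" if vD: "v \<in> D" for c v
  proof -
    obtain L where "(\<lambda>j. inner (X j) v) \<longlonglongrightarrow> L" using vD unfolding D_def convergent_def by blast
    then have "(\<lambda>j. c * inner (X j) v) \<longlonglongrightarrow> c * L" by (intro tendsto_mult_left)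
    then show ?thesis unfolding D_def convergent_def by auto
  qed
  have sD: "subspace D" unfolding subspace_def using D0 Dadd Dsc by blast
  have cD: "closed D" unfolding closed_sequential_limits
  proof (intro allI impI)
    fix vs v assume H: "(\<forall>n. vs n \<in> D) \<and> vs \<longlonglongrightarrow> v"
    have "Cauchy (\<lambda>j. inner (X j) v)"
    proof (rule metric_CauchyI)
      fix e :: real assume e: "e > 0"
      have "(\<lambda>n. vs n - v) \<longlonglongrightarrow> 0" using H by (simp add: LIM_zero)
      then have "(\<lambda>n. norm (vs n - v)) \<longlonglongrightarrow> 0" by (simp add: tendsto_norm_zero_iff)
      moreover have "e / (3 * (K + 1)) > 0" using e K0 by simp
      ultimately have "\<forall>\<^sub>F n in sequentially. norm (vs n - v) < e / (3 * (K + 1))"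
        by (rule order_tendstoD(2))
      then obtain n where n: "norm (vs n - v) < e / (3 * (K + 1))" by (meson eventually_sequentially order_refl)
      have "convergent (\<lambda>j. inner (X j) (vs n))" using H unfolding D_def by auto
      then have "Cauchy (\<lambda>j. inner (X j) (vs n))" by (simp add: convergent_Cauchy)
      then obtain M where M: "\<forall>i\<ge>M. \<forall>j\<ge>M. dist (inner (X i) (vs n)) (inner (X j) (vs n)) < e/3"
        using e metric_CauchyD[of "\<lambda>j. inner (X j) (vs n)" "e/3"] by force
      have bnd: "\<bar>inner (X i) (v - vs n)\<bar> \<le> e/3" for i
      proof -
        have "\<bar>inner (X i) (v - vs n)\<bar> \<le> K * norm (v - vs n)" by (rule ib)
        also have "\<dots> \<le> (K+1) * (e / (3 * (K + 1)))" using n K0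
          by (intro mult_mono) (auto simp: norm_minus_commute)
        also have "\<dots> = e/3" using K0 by (simp add: field_simps)
        finally show ?thesis .
      qed
      show "\<exists>M. \<forall>i\<ge>M. \<forall>j\<ge>M. dist (inner (X i) v) (inner (X j) v) < e"
      proof (intro exI allI impI)
        fix i j assume "M \<le> i" "M \<le> j"
        then have d: "\<bar>inner (X i) (vs n) - inner (X j) (vs n)\<bar> < e/3" using M by (auto simp: dist_real_def)
        have "inner (X i) v - inner (X j) v = inner (X i) (v - vs n) - inner (X j) (v - vs n)
              + (inner (X i) (vs n) - inner (X j) (vs n))" by (simp add: inner_diff_right)
        then show "dist (inner (X i) v) (inner (X j) v) < e" unfolding dist_real_def
          using bnd[of i] bnd[of j] d by linarith
      qed
    qed
    then show "v \<in> D" unfolding D_def by (simp add: Cauchy_convergent_iff)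
  qed
  have xD: "x m \<in> D" for m using cm unfolding D_def X_def by simp
  have allD: "v \<in> D" for v
  proof -
    obtain a where aD: "a \<in> D" and amin: "\<forall>c\<in>D. norm (v - a) \<le> norm (v - c)"
      using proj_exists[OF cD subspace_imp_convex[OF sD]] sD unfolding subspace_def by blast
    have o0: "inner (v - a) (x m) = 0" for m using proj_orth[OF sD aD xD amin] .
    have o: "inner (X j) (v - a) = 0" for j
      using o0[of "r j"] unfolding X_def comp_def by (simp only: inner_commute)
    have "inner (X j) v = inner (X j) a" for j using o[of j] by (simp add: inner_diff_right)
    then show ?thesis using aD unfolding D_def by simp
  qed
  define l where "l v = lim (\<lambda>j. inner (X j) v)" for v
  have lt: "(\<lambda>j. inner (X j) v) \<longlonglongrightarrow> l v" for v
    using allD[of v] unfolding D_def l_def by (simp add: convergent_LIMSEQ_iff)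
  have "bounded_linear l"
  proof (rule bounded_linear_intro[of _ K])
    fix v w
    have "(\<lambda>j. inner (X j) (v + w)) \<longlonglongrightarrow> l v + l w"
      unfolding inner_add_right by (intro tendsto_add lt)
    then show "l (v + w) = l v + l w" by (rule LIMSEQ_unique[OF lt[of "v + w"]])
  next
    fix c :: real and v
    have "(\<lambda>j. inner (X j) (c *\<^sub>R v)) \<longlonglongrightarrow> c * l v"
      unfolding inner_scaleR_right by (intro tendsto_mult_left lt)
    then have "l (c *\<^sub>R v) = c * l v" by (rule LIMSEQ_unique[OF lt[of "c *\<^sub>R v"]])
    then show "l (c *\<^sub>R v) = c *\<^sub>R l v" by simp
  next
    fix v
    have "(\<lambda>j. \<bar>inner (X j) v\<bar>) \<longlonglongrightarrow> \<bar>l v\<bar>" by (intro tendsto_rabs lt)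
    then have "\<bar>l v\<bar> \<le> K * norm v" by (rule LIMSEQ_le_const2) (use ib in blast)
    then show "norm (l v) \<le> norm v * K" by (simp add: mult.commute)
  qed
  then obtain z where z: "\<And>v. l v = inner z v" using riesz by blast
  have "weakly_converges X z" unfolding weakly_converges_def using lt z by simp
  then show ?thesis using r unfolding X_def by blast
qed



lemma grad_ineq:
  fixes f :: "'a::real_inner \<Rightarrow> real"
  assumes cvx: "convex_on UNIV f" and grad: "\<And>x. (f has_derivative (\<lambda>h. inner (g x) h)) (at x)"
  shows "f x + inner (g x) (y - x) \<le> f y"
proof -
  define d where "d = y - x"
  define \<phi> where "\<phi> t = f (x + t *\<^sub>R d)" for t :: real
  have c\<phi>: "convex_on UNIV \<phi>"
  proof (rule convex_onI)
    fix t a b :: real assume t: "0 < t" "t < 1"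
    have e: "x + ((1 - t) *\<^sub>R a + t *\<^sub>R b) *\<^sub>R d = (1 - t) *\<^sub>R (x + a *\<^sub>R d) + t *\<^sub>R (x + b *\<^sub>R d)"
      by (simp add: algebra_simps)
    show "\<phi> ((1 - t) *\<^sub>R a + t *\<^sub>R b) \<le> (1 - t) * \<phi> a + t * \<phi> b"
      unfolding \<phi>_def e using convex_onD[OF cvx, of t] t by simp
  qed simp
  have "((\<lambda>t::real. x + t *\<^sub>R d) has_derivative (\<lambda>t. t *\<^sub>R d)) (at 0)"
    by (intro derivative_eq_intros) auto
  moreover have "(f has_derivative (\<lambda>h. inner (g x) h)) (at (x + (0::real) *\<^sub>R d))"
    using grad[of x] by simp
  ultimately have "(\<phi> has_derivative (\<lambda>t. inner (g x) (t *\<^sub>R d))) (at 0)"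
    unfolding \<phi>_def by (rule has_derivative_compose)
  moreover have "(\<lambda>t. inner (g x) (t *\<^sub>R d)) = (*) (inner (g x) d)"
    by (rule ext) (simp add: mult.commute)
  ultimately have "(\<phi> has_real_derivative inner (g x) d) (at 0)"
    unfolding has_field_derivative_def by simp
  then have "\<phi> 1 - \<phi> 0 \<ge> inner (g x) d * (1 - 0)"
    by (intro convex_on_imp_above_tangent[OF c\<phi>]) auto
  then show ?thesis unfolding \<phi>_def d_def by simp
qed

lemma grad_mono:
  fixes f :: "'a::real_inner \<Rightarrow> real"
  assumes cvx: "convex_on UNIV f" and grad: "\<And>x. (f has_derivative (\<lambda>h. inner (g x) h)) (at x)"
  shows "inner (g x - g y) (x - y) \<ge> 0"
proof -
  have "f x + inner (g x) (y - x) \<le> f y" by (rule grad_ineq[OF cvx grad])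
  moreover have "f y + inner (g y) (x - y) \<le> f x" by (rule grad_ineq[OF cvx grad])
  ultimately show ?thesis by (simp add: inner_simps inner_commute algebra_simps)
qed

definition proxobj :: "real \<Rightarrow> ('a::real_normed_vector \<Rightarrow> real) \<Rightarrow> 'a \<Rightarrow> 'a \<Rightarrow> real" where
  "proxobj lam f y u = f u + (1 / (2 * lam)) * (norm (u - y))\<^sup>2"

lemma prox_min:
  fixes f :: "'a::{real_inner,complete_space} \<Rightarrow> real"
  assumes cvx: "convex_on UNIV f" and grad: "\<And>x. (f has_derivative (\<lambda>h. inner (g x) h)) (at x)"
    and bdd: "\<And>z. f s \<le> f z" and lam: "lam > 0"
  shows "\<forall>v. proxobj lam f y (prox lam f y) \<le> proxobj lam f y v"
proof -
  let ?\<phi> = "proxobj lam f y"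
  have cont: "continuous_on UNIV f"
    using grad has_derivative_continuous continuous_at_imp_continuous_on by blast
  have mid: "?\<phi> ((1/2) *\<^sub>R (u + w)) \<le> (?\<phi> u + ?\<phi> w)/2 - (1/(8*lam)) * (norm (u - w))\<^sup>2" for u w
  proof -
    have "f ((1 - 1/2) *\<^sub>R u + (1/2) *\<^sub>R w) \<le> (1 - 1/2) * f u + (1/2) * f w"
      by (rule convex_onD[OF cvx]) auto
    then have f1: "f ((1/2) *\<^sub>R (u + w)) \<le> (f u + f w)/2" by (simp add: scaleR_add_right)
    have e: "(1/2) *\<^sub>R (u + w) - y = (1/2) *\<^sub>R ((u - y) + (w - y))"
      by (simp add: algebra_simps flip: scaleR_add_left)
    have n: "(norm ((1/2) *\<^sub>R (u + w) - y))\<^sup>2 = ((norm (u - y))\<^sup>2 + (norm (w - y))\<^sup>2)/2 - (norm (u - w))\<^sup>2/4"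
      unfolding e midpoint_sq by simp
    define c2 where "c2 = 1 / (2 * lam)"
    have c8: "1/(8*lam) = c2/4" unfolding c2_def by simp
    have gen: "fm + c2*((nu+nw)/2 - nuw/4) \<le> (fu + c2*nu + (fw + c2*nw))/2 - (c2/4)*nuw"
      if "fm \<le> (fu+fw)/2" for fm fu fw nu nw nuw :: real
    proof -
      have "(fu + c2*nu + (fw + c2*nw))/2 - (c2/4)*nuw - (fm + c2*((nu+nw)/2 - nuw/4)) = (fu+fw)/2 - fm"
        by (simp add: field_simps)
      then show ?thesis using that by linarith
    qed
    show ?thesis unfolding proxobj_def n c8 c2_def[symmetric] by (rule gen[OF f1])
  qed
  have ex: "\<exists>u\<in>UNIV. \<forall>w\<in>UNIV. ?\<phi> u \<le> ?\<phi> w"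
  proof (rule min_exists[of UNIV _ "f s" "1/(8*lam)"])
    show "continuous_on UNIV ?\<phi>" unfolding proxobj_def by (intro continuous_intros cont)
    show "\<And>u. u \<in> UNIV \<Longrightarrow> f s \<le> ?\<phi> u" unfolding proxobj_def using bdd lam
      by (simp add: add_increasing2)
  qed (use mid lam in auto)
  then obtain u where u: "\<forall>w. ?\<phi> u \<le> ?\<phi> w" by blast
  have uniq: "w = u" if w: "\<forall>v. ?\<phi> w \<le> ?\<phi> v" for w
  proof -
    have "?\<phi> ((1/2) *\<^sub>R (u + w)) \<le> (?\<phi> u + ?\<phi> w)/2 - (1/(8*lam)) * (norm (u - w))\<^sup>2" by (rule mid)
    moreover have "?\<phi> u \<le> ?\<phi> ((1/2) *\<^sub>R (u + w))" "?\<phi> w \<le> ?\<phi> u" "?\<phi> u \<le> ?\<phi> w" using u w by auto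
    ultimately have "(1/(8*lam)) * (norm (u - w))\<^sup>2 \<le> 0" by (simp add: field_simps)
    moreover have p: "1/(8*lam) > 0" using lam by simp
    ultimately have "(norm (u - w))\<^sup>2 \<le> 0"
      using mult_le_cancel_left_pos[OF p, of "(norm (u - w))\<^sup>2" 0] by simp
    then show ?thesis by simp
  qed
  have "prox lam f y = u" unfolding prox_def
  proof (rule the_equality)
    show "\<forall>v. f u + 1 / (2 * lam) * (norm (u - y))\<^sup>2 \<le> f v + 1 / (2 * lam) * (norm (v - y))\<^sup>2"
      using u unfolding proxobj_def .
    fix w assume "\<forall>v. f w + 1 / (2 * lam) * (norm (w - y))\<^sup>2 \<le> f v + 1 / (2 * lam) * (norm (v - y))\<^sup>2"
    then show "w = u" using uniq unfolding proxobj_def by blast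
  qed
  then show ?thesis using u by simp
qed

lemma prox_char:
  fixes f :: "'a::{real_inner,complete_space} \<Rightarrow> real"
  assumes cvx: "convex_on UNIV f" and grad: "\<And>x. (f has_derivative (\<lambda>h. inner (g x) h)) (at x)"
    and bdd: "\<And>z. f s \<le> f z" and lam: "lam > 0"
  shows "y - prox lam f y = lam *\<^sub>R g (prox lam f y)"
proof -
  define u where "u = prox lam f y"
  have min: "\<forall>v. proxobj lam f y u \<le> proxobj lam f y v"
    unfolding u_def by (rule prox_min[OF cvx grad bdd lam])
  have "(proxobj lam f y has_derivative
     (\<lambda>h. inner (g u) h + (1 / (2 * lam)) * (inner h (u - y) + inner (u - y) h))) (at u)"
    unfolding proxobj_def power2_norm_eq_inner
    by (intro derivative_eq_intros) (auto intro: grad)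
  then have "(\<lambda>h. inner (g u) h + (1 / (2 * lam)) * (inner h (u - y) + inner (u - y) h)) = (\<lambda>h. 0)"
    by (rule has_derivative_local_min) (use min in auto)
  then have "inner (g u) h + (1 / lam) * inner (u - y) h = 0" for h
    by (drule_tac fun_cong[of _ _ h]) (simp add: inner_commute)
  then have "inner (lam *\<^sub>R g u + (u - y)) h = 0" for h
    using lam by (simp add: inner_simps field_simps)
  then have "lam *\<^sub>R g u + (u - y) = 0" by (metis inner_eq_zero_iff)
  then show ?thesis unfolding u_def[symmetric] by (simp add: algebra_simps)
qed



lemma norm_add_sq:
  fixes a b :: "'a::real_inner"
  shows "(norm (a + b))\<^sup>2 = (norm a)\<^sup>2 + 2 * inner a b + (norm b)\<^sup>2"
  unfolding power2_norm_eq_inner by (simp add: inner_add_left inner_add_right inner_commute)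

lemma sum_real_nat: "2 * (\<Sum>k<n. real k) = real n * (real n - 1)"
  by (induction n) (auto simp: algebra_simps)

theorem mainTheorem14:
  fixes f :: "'a::{real_inner, complete_space} \<Rightarrow> real"
    and gradf :: "'a \<Rightarrow> 'a"
    and p :: real
    and y :: "nat \<Rightarrow> 'a"
    and lam :: "nat \<Rightarrow> real"
  assumes convex: "convex_on UNIV f"
    and grad: "\<And>x. (f has_derivative (\<lambda>h. inner (gradf x) h)) (at x)"
    and grad_cont: "continuous_on UNIV gradf"
    and S_nonempty: "\<exists>x. \<forall>z. f x \<le> f z"
    and grad_lip: "\<And>B. bounded B \<Longrightarrow>
          \<exists>L. \<forall>x\<in>B. \<forall>z\<in>B. norm (gradf x - gradf z) \<le> L * norm (x - z)"
    and p_ge: "p \<ge> 1"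
    and lam_def: "\<And>k. lam k = norm (gradf (y k)) powr (- ((p - 1) / p))"
    and y_rec: "\<And>k. y (Suc k) = prox (lam k) f (y k)"
    and grad_nz: "\<And>k. gradf (y k) \<noteq> 0"
  shows "(\<lambda>k. f (y (Suc k)) - (INF x. f x)) \<in> o(\<lambda>k. real k powr (- (2 - 1 / p)))
         \<and> (\<exists>z. (\<forall>x. f z \<le> f x) \<and> weakly_converges y z)"
proof -
  obtain s where s: "\<And>z. f s \<le> f z" using S_nonempty by blast
  have INF_eq: "(INF x. f x) = f s" by (rule cInf_eq_minimum) (auto intro: s)
  define G where "G k = norm (gradf (y k))" for k
  define q where "q = (p - 1) / p"
  have p0: "p > 0" using p_ge by simp
  have q0: "q \<ge> 0" unfolding q_def using p_ge by simp
  have q1: "2 - 1 / p = 1 + q" unfolding q_def using p0 by (simp add: field_simps)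
  have Gpos: "G k > 0" for k unfolding G_def using grad_nz by simp
  have lamG: "lam k = G k powr (- q)" for k unfolding G_def q_def lam_def ..
  have lam_pos: "lam k > 0" for k unfolding lamG using Gpos[of k] by simp
  have step: "y k - y (Suc k) = lam k *\<^sub>R gradf (y (Suc k))" for k
    unfolding y_rec using prox_char[OF convex grad s lam_pos] .
  have Gmono: "G (Suc k) \<le> G k" for k
  proof -
    define g where "g = gradf (y (Suc k))"
    define h where "h = gradf (y k)"
    have "inner (g - h) (y (Suc k) - y k) \<ge> 0" unfolding g_def h_def by (rule grad_mono[OF convex grad])
    moreover have "y (Suc k) - y k = - (lam k *\<^sub>R g)" using step[of k] unfolding g_def
      by (simp add: algebra_simps)
    ultimately have "lam k * inner (g - h) g \<le> 0" by (simp add: inner_simps)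
    then have "inner (g - h) g \<le> 0" using lam_pos[of k] by (simp add: mult_le_0_iff)
    then have "inner g g \<le> inner h g" by (simp add: inner_simps)
    also have "\<dots> \<le> norm h * norm g" by (rule Cauchy_Schwarz_ineq2[THEN order_trans[OF abs_ge_self]])
    finally have "norm g * norm g \<le> norm h * norm g" by (simp add: power2_eq_square[symmetric] power2_norm_eq_inner)
    moreover have "norm g > 0" unfolding g_def using grad_nz by simp
    ultimately show ?thesis unfolding G_def g_def h_def by simp
  qed
  have Gdec: "m \<le> n \<Longrightarrow> G n \<le> G m" for m n by (rule lift_Suc_antimono_le[of G, OF Gmono])
  define lmin where "lmin = G 0 powr (- q)"
  have lmin_pos: "lmin > 0" unfolding lmin_def using Gpos[of 0] by simp
  have lmin_le: "lmin \<le> lam k" for k unfolding lmin_def lamG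
    by (rule powr_mono2') (use q0 Gpos Gdec in auto)
  define e where "e k = f (y k) - f s" for k
  have e0: "e k \<ge> 0" for k unfolding e_def using s by simp
  have desc: "e (Suc k) + lam k * (G (Suc k))\<^sup>2 \<le> e k" for k
  proof -
    have "f (y (Suc k)) + inner (gradf (y (Suc k))) (y k - y (Suc k)) \<le> f (y k)"
      by (rule grad_ineq[OF convex grad])
    then show ?thesis unfolding e_def G_def step by (simp add: power2_norm_eq_inner)
  qed
  have edec: "e (Suc k) \<le> e k" for k using desc[of k] lam_pos[of k]
    by (smt (verit) mult_nonneg_nonneg zero_le_power2)
  have fejer: "(norm (y (Suc k) - z))\<^sup>2 + 2 * lam k * (f (y (Suc k)) - f z) \<le> (norm (y k - z))\<^sup>2"
    if z: "\<And>x. f z \<le> f x" for k z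
  proof -
    define d where "d = y k - y (Suc k)"
    have e1: "y k - z = d + (y (Suc k) - z)" unfolding d_def by simp
    have eq: "(norm (y k - z))\<^sup>2 = (norm d)\<^sup>2 + 2 * inner d (y (Suc k) - z) + (norm (y (Suc k) - z))\<^sup>2"
      unfolding e1 by (rule norm_add_sq)
    have "f (y (Suc k)) + inner (gradf (y (Suc k))) (z - y (Suc k)) \<le> f z"
      by (rule grad_ineq[OF convex grad])
    then have "inner (gradf (y (Suc k))) (y (Suc k) - z) \<ge> f (y (Suc k)) - f z"
      by (simp add: inner_diff_right)
    then have "lam k * inner (gradf (y (Suc k))) (y (Suc k) - z) \<ge> lam k * (f (y (Suc k)) - f z)"
      using lam_pos[of k] by (simp add: mult_left_mono)
    moreover have "inner d (y (Suc k) - z) = lam k * inner (gradf (y (Suc k))) (y (Suc k) - z)"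
      unfolding d_def step by simp
    moreover have "(norm d)\<^sup>2 \<ge> 0" by simp
    moreover have "2 * lam k * (f (y (Suc k)) - f z) = 2 * (lam k * (f (y (Suc k)) - f z))" by simp
    ultimately show ?thesis using eq by linarith
  qed
  define D where "D = (norm (y 0 - s))\<^sup>2"
  define a where "a k = lam k * e (Suc k)" for k
  have a0: "a k \<ge> 0" for k unfolding a_def using lam_pos[of k] e0[of "Suc k"] by (intro mult_nonneg_nonneg) auto
  have sumb: "2 * (\<Sum>k<n. a k) \<le> D - (norm (y n - s))\<^sup>2" for n
  proof (induction n)
    case 0 then show ?case unfolding D_def by simp
  next
    case (Suc n)
    have "(norm (y (Suc n) - s))\<^sup>2 + 2 * lam n * (f (y (Suc n)) - f s) \<le> (norm (y n - s))\<^sup>2"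
      by (rule fejer) (rule s)
    then show ?case using Suc unfolding a_def e_def by simp
  qed
  have sumb2: "(\<Sum>k<n. a k) \<le> D / 2" for n
  proof -
    have "(norm (y n - s))\<^sup>2 \<ge> 0" by simp
    then show ?thesis using sumb[of n] by linarith
  qed
  have summ: "summable a" by (rule summableI_nonneg_bounded[OF a0 sumb2])
  define B where "B = D / (2 * lmin)"
  have sume: "(\<Sum>k<n. e (Suc k)) \<le> B" for n
  proof -
    have "lmin * (\<Sum>k<n. e (Suc k)) = (\<Sum>k<n. lmin * e (Suc k))" by (simp add: sum_distrib_left)
    also have "\<dots> \<le> (\<Sum>k<n. a k)" unfolding a_def
      by (intro sum_mono mult_right_mono lmin_le e0)
    also have "\<dots> \<le> D / 2" by (rule sumb2)
    finally show ?thesis unfolding B_def using lmin_pos by (simp add: field_simps)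
  qed
  have wsum: "(\<Sum>k<n. real k * lam k * (G (Suc k))\<^sup>2) + real n * e n \<le> (\<Sum>k<n. e (Suc k))" for n
  proof (induction n)
    case 0 then show ?case by simp
  next
    case (Suc n)
    have "real n * (e (Suc n) + lam n * (G (Suc n))\<^sup>2) \<le> real n * e n"
      by (intro mult_left_mono desc) auto
    then show ?case using Suc by (simp add: algebra_simps)
  qed
  define C1 where "C1 = sqrt (4 * B / lmin)"
  have Gbound: "G n \<le> C1 / real n" if n2: "n \<ge> 2" for n
  proof -
    have h1: "(\<Sum>k<n. real k * lam k * (G (Suc k))\<^sup>2) \<le> B"
      using wsum[of n] sume[of n] e0[of n] by (smt (verit) of_nat_0_le_iff mult_nonneg_nonneg)
    have h2: "(\<Sum>k<n. real k * lmin * (G n)\<^sup>2) \<le> (\<Sum>k<n. real k * lam k * (G (Suc k))\<^sup>2)"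
    proof (rule sum_mono)
      fix k assume "k \<in> {..<n}"
      then have "G n \<le> G (Suc k)" by (intro Gdec) auto
      then have "(G n)\<^sup>2 \<le> (G (Suc k))\<^sup>2" using Gpos[of n] by (intro power_mono) auto
      then show "real k * lmin * (G n)\<^sup>2 \<le> real k * lam k * (G (Suc k))\<^sup>2"
        using lmin_le[of k] lmin_pos by (intro mult_mono mult_left_mono) auto
    qed
    have h3: "(\<Sum>k<n. real k * lmin * (G n)\<^sup>2) = lmin * (G n)\<^sup>2 * (\<Sum>k<n. real k)"
      by (simp add: sum_distrib_left sum_distrib_right algebra_simps)
    have h4: "(\<Sum>k<n. real k) \<ge> (real n)\<^sup>2 / 4"
    proof -
      have "real n \<ge> 2" using n2 by simp
      then have "real n * (real n - 1) \<ge> (real n)\<^sup>2 / 2" by (simp add: power2_eq_square field_simps)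
      then show ?thesis using sum_real_nat[of n] by simp
    qed
    have c0: "lmin * (G n)\<^sup>2 \<ge> 0" using lmin_pos by simp
    have "lmin * (G n)\<^sup>2 * ((real n)\<^sup>2 / 4) \<le> lmin * (G n)\<^sup>2 * (\<Sum>k<n. real k)"
      by (rule mult_left_mono[OF h4 c0])
    also have "\<dots> \<le> B" using h1 h2 h3 by linarith
    finally have "lmin * (G n)\<^sup>2 * ((real n)\<^sup>2 / 4) \<le> B" .
    then have "(G n * real n)\<^sup>2 \<le> 4 * B / lmin" using lmin_pos
      by (simp add: field_simps power_mult_distrib)
    then have "G n * real n \<le> C1" unfolding C1_def by (rule real_le_rsqrt)
    then show ?thesis using n2 by (simp add: field_simps)
  qed
  have C1pos: "C1 > 0"
  proof -
    have "G 2 \<le> C1 / 2" using Gbound[of 2] by simp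
    then show ?thesis using Gpos[of 2] by simp
  qed
  define cc where "cc = 1 / C1 powr q"
  have ccpos: "cc > 0" unfolding cc_def using C1pos by simp
  have lamlb: "cc * real n powr q \<le> lam n" if n2: "n \<ge> 2" for n
  proof -
    have np: "real n > 0" using n2 by simp
    have "(C1 / real n) powr (- q) \<le> G n powr (- q)"
      by (rule powr_mono2') (use q0 Gpos Gbound[OF n2] in auto)
    moreover have "(C1 / real n) powr (- q) = cc * real n powr q" unfolding cc_def
      using np C1pos by (simp add: powr_minus_divide powr_divide)
    ultimately show ?thesis unfolding lamG by simp
  qed
  have eanti: "m \<le> n \<Longrightarrow> e n \<le> e m" for m n by (rule lift_Suc_antimono_le[of e, OF edec])
  have Tb: "real n * (cc * real n powr q) * e (2 * n) \<le> (\<Sum>i. a (i + n))" if n2: "n \<ge> 2" for n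
  proof -
    have "(\<Sum>i<n. a (i + n)) \<le> (\<Sum>i. a (i + n))"
      by (rule sum_le_suminf) (use summable_ignore_initial_segment[OF summ] a0 in auto)
    moreover have "(\<Sum>i<n. cc * real n powr q * e (2 * n)) \<le> (\<Sum>i<n. a (i + n))"
    proof (rule sum_mono)
      fix i assume i: "i \<in> {..<n}"
      have "cc * real n powr q \<le> cc * real (i + n) powr q"
        using ccpos q0 by (intro mult_left_mono powr_mono2) auto
      also have "\<dots> \<le> lam (i + n)" using n2 by (intro lamlb) auto
      finally have l1: "cc * real n powr q \<le> lam (i + n)" .
      have l2: "e (2 * n) \<le> e (Suc (i + n))" using i by (intro eanti) auto
      show "cc * real n powr q * e (2 * n) \<le> a (i + n)" unfolding a_def
        by (rule mult_mono[OF l1 l2]) (use lam_pos e0 in \<open>auto simp: less_imp_le\<close>)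
    qed
    ultimately show ?thesis by (simp add: algebra_simps)
  qed
  have part1: "(\<lambda>k. f (y (Suc k)) - (INF x. f x)) \<in> o(\<lambda>k. real k powr (- (2 - 1 / p)))"
  proof (rule landau_o.smallI)
    fix c :: real assume c: "c > 0"
    define r where "r = c * cc / 2 powr (1 + q)"
    have r: "r > 0" unfolding r_def using c ccpos by simp
    obtain N where N: "\<And>n. n \<ge> N \<Longrightarrow> norm (\<Sum>i. a (i + n)) < r"
      using suminf_exist_split[OF r summ] by blast
    show "\<forall>\<^sub>F k in sequentially. norm (f (y (Suc k)) - (INF x. f x)) \<le> c * norm (real k powr (- (2 - 1 / p)))"
    proof (rule eventually_sequentiallyI[of "max 4 (2 * N)"])
      fix k assume k: "max 4 (2 * N) \<le> k"
      define n where "n = Suc k div 2"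
      have n2: "n \<ge> 2" and nN: "n \<ge> N" and n2k: "2 * n \<le> Suc k" and kn: "k \<le> 2 * n"
        using k unfolding n_def by auto
      have kpos: "real k > 0" using k by simp
      have npos: "real n > 0" using n2 by simp
      have T: "real n * (cc * real n powr q) * e (2 * n) < r"
        using Tb[OF n2] N[OF nN] by simp
      have pw: "real n * (cc * real n powr q) = cc * real n powr (1 + q)"
        using npos by (simp add: powr_add)
      have ek: "e (Suc k) \<le> e (2 * n)" using n2k by (rule eanti)
      have kp: "real k powr (1 + q) \<le> 2 powr (1 + q) * real n powr (1 + q)"
      proof -
        have "real k powr (1 + q) \<le> (2 * real n) powr (1 + q)" using kn q0 by (intro powr_mono2) auto
        then show ?thesis by (simp add: powr_mult)
      qed
      have pos1: "real k powr (1 + q) > 0" using kpos by simp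
      have pos2: "2 powr (1 + q) > 0" by simp
      have "e (Suc k) * real k powr (1 + q) \<le> e (2 * n) * (2 powr (1 + q) * real n powr (1 + q))"
        using ek kp e0 pos1 by (intro mult_mono) auto
      also have "\<dots> = 2 powr (1 + q) / cc * (real n * (cc * real n powr q) * e (2 * n))"
        unfolding pw using ccpos by (simp add: field_simps)
      also have "\<dots> \<le> 2 powr (1 + q) / cc * r"
        using T ccpos by (intro mult_left_mono) auto
      also have "\<dots> = c" unfolding r_def using ccpos by (simp add: field_simps)
      finally have "e (Suc k) * real k powr (1 + q) \<le> c" .
      then have "e (Suc k) \<le> c / real k powr (1 + q)" using pos1 by (simp add: field_simps)
      also have "\<dots> = c * real k powr (- (1 + q))" unfolding powr_minus_divide by simp
      finally have fin: "e (Suc k) \<le> c * real k powr (- (1 + q))" .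
      show "norm (f (y (Suc k)) - (INF x. f x)) \<le> c * norm (real k powr (- (2 - 1 / p)))"
        unfolding INF_eq q1 using fin e0[of "Suc k"] unfolding e_def by simp
    qed
  qed
  have fej: "(norm (y (Suc k) - z))\<^sup>2 \<le> (norm (y k - z))\<^sup>2" if z: "\<And>x. f z \<le> f x" for k z
  proof -
    have "lam k * (f (y (Suc k)) - f z) \<ge> 0" using lam_pos[of k] z[of "y (Suc k)"] by simp
    then show ?thesis using fejer[OF z, of k] by linarith
  qed
  have ddec: "norm (y n - z) \<le> norm (y m - z)" if z: "\<And>x. f z \<le> f x" and mn: "m \<le> n" for m n z
  proof -
    have "(norm (y n - z))\<^sup>2 \<le> (norm (y m - z))\<^sup>2"
      by (rule lift_Suc_antimono_le[of "\<lambda>k. (norm (y k - z))\<^sup>2", OF fej[OF z] mn])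
    then show ?thesis by (rule power2_le_imp_le) simp
  qed
  define K where "K = norm s + norm (y 0 - s)"
  have ybd: "norm (y k) \<le> K" for k
  proof -
    have "norm (y k) \<le> norm (y k - s) + norm s" using norm_triangle_ineq[of "y k - s" s] by simp
    also have "\<dots> \<le> norm (y 0 - s) + norm s" using ddec[OF s, of 0 k] by simp
    finally show ?thesis unfolding K_def by simp
  qed
  have alim: "a \<longlonglongrightarrow> 0" using summ by (rule summable_LIMSEQ_zero)
  have eSlim: "(\<lambda>k. e (Suc k)) \<longlonglongrightarrow> 0"
  proof (rule tendsto_sandwich[of "\<lambda>k. 0" _ _ "\<lambda>k. a k / lmin"])
    show "\<forall>\<^sub>F k in sequentially. 0 \<le> e (Suc k)" using e0 by simp
    show "\<forall>\<^sub>F k in sequentially. e (Suc k) \<le> a k / lmin"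
    proof (rule always_eventually, rule allI)
      fix k
      have "lmin * e (Suc k) \<le> a k" unfolding a_def by (intro mult_right_mono lmin_le e0)
      then show "e (Suc k) \<le> a k / lmin" using lmin_pos by (simp add: field_simps)
    qed
    show "(\<lambda>k. 0) \<longlonglongrightarrow> (0::real)" by simp
    have "(\<lambda>k. a k / lmin) \<longlonglongrightarrow> 0 / lmin" by (intro tendsto_divide alim tendsto_const) (use lmin_pos in simp)
    then show "(\<lambda>k. a k / lmin) \<longlonglongrightarrow> 0" by simp
  qed
  have elim: "e \<longlonglongrightarrow> 0" using eSlim filterlim_sequentially_Suc[of e "nhds 0"] by simp
  have flim: "(\<lambda>k. f (y k)) \<longlonglongrightarrow> f s"
  proof -
    have "(\<lambda>k. e k + f s) \<longlonglongrightarrow> 0 + f s" by (intro tendsto_add elim tendsto_const)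
    then show ?thesis unfolding e_def by simp
  qed
  have cluster: "\<forall>x. f z \<le> f x" if r: "strict_mono r" and wz: "weakly_converges (y \<circ> r) z" for r z
  proof -
    have ineq: "f z + inner (gradf z) (y (r j) - z) \<le> f (y (r j))" for j by (rule grad_ineq[OF convex grad])
    have "(\<lambda>j. inner (y (r j)) (gradf z)) \<longlonglongrightarrow> inner z (gradf z)"
      using wz unfolding weakly_converges_def comp_def by blast
    then have "(\<lambda>j. f z + (inner (y (r j)) (gradf z) - inner z (gradf z))) \<longlonglongrightarrow> f z + (inner z (gradf z) - inner z (gradf z))"
      by (intro tendsto_add tendsto_diff tendsto_const)
    then have l1: "(\<lambda>j. f z + inner (gradf z) (y (r j) - z)) \<longlonglongrightarrow> f z"
      by (simp add: inner_diff_right inner_commute)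
    have l2: "(\<lambda>j. f (y (r j))) \<longlonglongrightarrow> f s" using LIMSEQ_subseq_LIMSEQ[OF flim r] by (simp add: comp_def)
    have "f z \<le> f s" using LIMSEQ_le[OF l1 l2] ineq by blast
    then show ?thesis using s order_trans by blast
  qed
  have uniq: "z1 = z2"
    if z1: "\<And>x. f z1 \<le> f x" and z2: "\<And>x. f z2 \<le> f x"
      and r1: "strict_mono r1" and w1: "weakly_converges (y \<circ> r1) z1"
      and r2: "strict_mono r2" and w2: "weakly_converges (y \<circ> r2) z2" for z1 z2 r1 r2
  proof -
    have conv: "\<exists>L. (\<lambda>k. (norm (y k - z))\<^sup>2) \<longlonglongrightarrow> L" if z: "\<And>x. f z \<le> f x" for z
    proof -
      have "decseq (\<lambda>k. (norm (y k - z))\<^sup>2)" by (rule decseq_SucI) (rule fej[OF z])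
      then obtain L where "(\<lambda>k. (norm (y k - z))\<^sup>2) \<longlonglongrightarrow> L" by (rule decseq_convergent[of _ 0]) auto
      then show ?thesis by blast
    qed
    obtain L1 where L1: "(\<lambda>k. (norm (y k - z1))\<^sup>2) \<longlonglongrightarrow> L1" using conv[OF z1] by blast
    obtain L2 where L2: "(\<lambda>k. (norm (y k - z2))\<^sup>2) \<longlonglongrightarrow> L2" using conv[OF z2] by blast
    define h where "h k = inner (y k) (z1 - z2)" for k
    have hid: "h k = ((norm (y k - z2))\<^sup>2 - (norm (y k - z1))\<^sup>2 + (norm z1)\<^sup>2 - (norm z2)\<^sup>2) / 2" for k
      unfolding h_def power2_norm_eq_inner by (simp add: inner_simps inner_commute algebra_simps)
    define L where "L = (L2 - L1 + (norm z1)\<^sup>2 - (norm z2)\<^sup>2) / 2"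
    have hL: "h \<longlonglongrightarrow> L" unfolding hid[abs_def] L_def
      by (intro tendsto_divide tendsto_add tendsto_diff L1 L2 tendsto_const) auto
    have a1: "(\<lambda>j. h (r1 j)) \<longlonglongrightarrow> inner z1 (z1 - z2)"
      using w1 unfolding weakly_converges_def h_def comp_def by blast
    have b1: "(\<lambda>j. h (r1 j)) \<longlonglongrightarrow> L" using LIMSEQ_subseq_LIMSEQ[OF hL r1] by (simp add: comp_def)
    have a2: "(\<lambda>j. h (r2 j)) \<longlonglongrightarrow> inner z2 (z1 - z2)"
      using w2 unfolding weakly_converges_def h_def comp_def by blast
    have b2: "(\<lambda>j. h (r2 j)) \<longlonglongrightarrow> L" using LIMSEQ_subseq_LIMSEQ[OF hL r2] by (simp add: comp_def)
    have "inner z1 (z1 - z2) = inner z2 (z1 - z2)" using LIMSEQ_unique[OF a1 b1] LIMSEQ_unique[OF a2 b2] by simp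
    then have "inner (z1 - z2) (z1 - z2) = 0" by (simp add: inner_diff_left)
    then show ?thesis by simp
  qed
  obtain r0 z0 where r0: "strict_mono r0" and w0: "weakly_converges (y \<circ> r0) z0"
    using weak_compact[of y K] ybd by blast
  have z0min: "\<forall>x. f z0 \<le> f x" by (rule cluster[OF r0 w0])
  have "weakly_converges y z0"
    unfolding weakly_converges_def
  proof (rule ccontr)
    assume "\<not> (\<forall>v. (\<lambda>k. inner (y k) v) \<longlonglongrightarrow> inner z0 v)"
    then obtain v where nv: "\<not> (\<lambda>k. inner (y k) v) \<longlonglongrightarrow> inner z0 v" by blast
    then obtain \<epsilon> where \<epsilon>: "\<epsilon> > 0" and inf: "\<forall>m. \<exists>n\<ge>m. \<not> norm (inner (y n) v - inner z0 v) < \<epsilon>"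
      unfolding LIMSEQ_iff by blast
    define S where "S = {n. \<epsilon> \<le> norm (inner (y n) v - inner z0 v)}"
    have infS: "infinite S" unfolding infinite_nat_iff_unbounded_le S_def using inf by (auto simp: not_less)
    define \<sigma> where "\<sigma> = enumerate S"
    have \<sigma>: "strict_mono \<sigma>" unfolding \<sigma>_def by (rule strict_mono_enumerate[OF infS])
    have \<sigma>S: "\<sigma> j \<in> S" for j unfolding \<sigma>_def by (rule enumerate_in_set[OF infS])
    obtain r1 z1 where r1: "strict_mono r1" and w1: "weakly_converges ((y \<circ> \<sigma>) \<circ> r1) z1"
      using weak_compact[of "y \<circ> \<sigma>" K] ybd by auto
    have sr: "strict_mono (\<sigma> \<circ> r1)" using \<sigma> r1 by (rule strict_mono_o)
    have w1': "weakly_converges (y \<circ> (\<sigma> \<circ> r1)) z1" using w1 by (simp add: comp_assoc)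
    have z1min: "\<forall>x. f z1 \<le> f x" by (rule cluster[OF sr w1'])
    have "z1 = z0" using uniq[of z1 z0 "\<sigma> \<circ> r1" r0] z1min z0min sr w1' r0 w0 by blast
    then have "(\<lambda>j. inner (y (\<sigma> (r1 j))) v) \<longlonglongrightarrow> inner z0 v"
      using w1' unfolding weakly_converges_def comp_def by blast
    then obtain M where "\<forall>j\<ge>M. norm (inner (y (\<sigma> (r1 j))) v - inner z0 v) < \<epsilon>"
      using \<epsilon> unfolding LIMSEQ_iff by blast
    then have "norm (inner (y (\<sigma> (r1 M))) v - inner z0 v) < \<epsilon>" by blast
    moreover have "\<sigma> (r1 M) \<in> S" by (rule \<sigma>S)
    ultimately show False unfolding S_def by simp
  qed
  then show ?thesis using part1 z0min by blast
qed

end
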